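(* Let $e$ be an environment with binary treatment $T^e$ and covariates $X^e$. Let $\Phi(T,X)$ be a representation, and define the covariate representation $$\Phi(X^e)=\{\Phi(1,X^e),\Phi(0,X^e)\}.$$ Let $\epsilon>0$. Suppose that $\epsilon \le P(T^e=1\mid X^e)\le 1-\epsilon$ with probability 1. Then $\epsilon\le P(T^e=1\mid \Phi(X^e))\le 1-\epsilon$ with probability 1.
   Context: A representation is a (measurable) function $\Phi(T,X)$ of the treatment and the covariates. *)

theory Defs
  imports "HOL-Probability.Probability"
begin

definition cond_prob_treat ::
  "'a measure \<Rightarrow> ('a \<Rightarrow> bool) \<Rightarrow> ('a \<Rightarrow> 'b) \<Rightarrow> 'b measure \<Rightarrow> 'a \<Rightarrow> real" where
  "cond_prob_treat M T Y N =
     real_cond_exp M (vimage_algebra (space M) Y N) (\<lambda>\<omega>. if T \<omega> then 1 else 0)"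

text \<open>Covariate representation Phi(X) = (Phi(1,X), Phi(0,X)), treatment 1 = True, 0 = False.\<close>
definition cov_rep :: "(bool \<times> 'x \<Rightarrow> 'r) \<Rightarrow> ('a \<Rightarrow> 'x) \<Rightarrow> 'a \<Rightarrow> 'r \<times> 'r" where
  "cov_rep \<Phi> X = (\<lambda>\<omega>. (\<Phi> (True, X \<omega>), \<Phi> (False, X \<omega>)))"

end

theory Submission
  imports Defs
begin

theorem theorem2:
  fixes M :: "'a measure" and T :: "'a \<Rightarrow> bool" and X :: "'a \<Rightarrow> 'x"
    and N :: "'x measure" and R :: "'r measure"
    and \<Phi> :: "bool \<times> 'x \<Rightarrow> 'r" and \<epsilon> :: real
  assumes "prob_space M"
    and "T \<in> measurable M (count_space UNIV)"
    and "X \<in> measurable M N"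
    and "\<Phi> \<in> measurable (count_space UNIV \<Otimes>\<^sub>M N) R"
    and "\<epsilon> > 0"
    and "AE \<omega> in M. \<epsilon> \<le> cond_prob_treat M T X N \<omega> \<and> cond_prob_treat M T X N \<omega> \<le> 1 - \<epsilon>"
  shows "AE \<omega> in M. \<epsilon> \<le> cond_prob_treat M T (cov_rep \<Phi> X) (R \<Otimes>\<^sub>M R) \<omega>
                   \<and> cond_prob_treat M T (cov_rep \<Phi> X) (R \<Otimes>\<^sub>M R) \<omega> \<le> 1 - \<epsilon>"
proof -
  interpret P: prob_space M by fact
  define G where "G = vimage_algebra (space M) X N"
  define F where "F = vimage_algebra (space M) (cov_rep \<Phi> X) (R \<Otimes>\<^sub>M R)"
  define f where "f = (\<lambda>\<omega>. if T \<omega> then 1 else 0::real)"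
  have Xm: "X \<in> measurable G N" unfolding G_def
    by (rule measurable_vimage_algebra1) (use assms(3) in \<open>auto simp: measurable_def\<close>)
  have cm: "cov_rep \<Phi> X \<in> measurable G (R \<Otimes>\<^sub>M R)" if "X \<in> measurable G N" for G
  proof -
    have a: "(\<lambda>\<omega>. \<Phi> (b, X \<omega>)) \<in> measurable G R" for b
      by (rule measurable_compose[OF _ assms(4)]) (rule measurable_Pair, auto intro: that)
    show ?thesis unfolding cov_rep_def by (rule measurable_Pair[OF a a])
  qed
  have subG: "subalgebra M G" unfolding subalgebra_def G_def
    using sets_image_in_sets[OF refl assms(3)] by simp
  have subF: "subalgebra M F" unfolding subalgebra_def F_def
    using sets_image_in_sets[OF refl cm[OF assms(3)]] by simp
  have subGF: "subalgebra G F" unfolding subalgebra_def F_def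
    using sets_image_in_sets[OF _ cm[OF Xm]] by (simp add: G_def)
  interpret SG: finite_measure_subalgebra M G
    by unfold_locales (rule subG)
  interpret SF: finite_measure_subalgebra M F
    by unfold_locales (rule subF)
  have fm: "f \<in> borel_measurable M" unfolding f_def
    using measurable_compose[OF assms(2), of "\<lambda>b. if b then 1 else (0::real)" borel] by simp
  have fi: "integrable M f"
    by (rule P.integrable_const_bound[where B=1]) (use fm in \<open>auto simp: f_def\<close>)
  have gi: "integrable M (real_cond_exp M G f)" using SG.real_cond_exp_int(1)[OF fi] .
  have bnd: "AE \<omega> in M. \<epsilon> \<le> real_cond_exp M G f \<omega> \<and> real_cond_exp M G f \<omega> \<le> 1 - \<epsilon>"
    using assms(6) unfolding cond_prob_treat_def G_def f_def .
  have tower: "AE x in M. real_cond_exp M F (real_cond_exp M G f) x = real_cond_exp M F f x"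
    by (rule SF.real_cond_exp_nested_subalg[OF subG subGF fi])
  have l: "AE x in M. real_cond_exp M F (real_cond_exp M G f) x \<ge> \<epsilon>"
    by (rule SF.real_cond_exp_ge_c[OF gi]) (use bnd in auto)
  have u: "AE x in M. real_cond_exp M F (real_cond_exp M G f) x \<le> 1 - \<epsilon>"
    by (rule SF.real_cond_exp_le_c[OF gi]) (use bnd in auto)
  show ?thesis using tower l u unfolding cond_prob_treat_def F_def f_def by eventually_elim auto
qed

end
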